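(* Let $G$ be a finite, simple, connected graph with $n$ vertices $v_1,\ldots,v_n$ and $m$ edges, let $a\in[0,1]$ and $b\in\mathbb{R}$, and let $\tilde{\mathbf U}$ be the generalized Grover matrix of $G$ with parameters $a,b$. Then \[ \det(\mathbf I_{2m}-u\tilde{\mathbf U})=\frac{(1-b^2u^2)^{m-n}}{\prod_{i=1}^n \deg v_i}\det\Big(\mathbf D\big\{(1+b(2a-b)u^2)\mathbf I_n+b(b-a)u^2\mathbf D\big\}-u\mathbf A_d\Big), \] where $\mathbf D$ is the $n\times n$ diagonal matrix with $\mathbf D_{v_iv_i}=\deg v_i$, and $\mathbf A_d=(A^{(d)}_{uv})_{u,v\in V(G)}$ is the $n\times n$ matrix with $A^{(d)}_{uv}=(2-\deg u)a+b\deg u$ if $u$ and $v$ are adjacent, and $A^{(d)}_{uv}=0$ otherwise.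
   Context: For a simple graph $G$, $D(G)$ denotes the set of $2m$ arcs: for each edge $uv$ both $(u,v)$ and $(v,u)$. For an arc $e=(u,v)$, $o(e)=u$, $t(e)=v$, $e^{-1}=(v,u)$; $d_v=\deg v$ is the degree of $v$. For $a\in[0,1]$, $b\in\mathbb R$, the generalized Grover matrix $\tilde{\mathbf U}=(\tilde U_{ef})_{e,f\in D(G)}$ is the $2m\times 2m$ matrix with $\tilde U_{ef}=(2/d_{t(f)}-1)a+b$ if $t(f)=o(e)$ and $f\neq e^{-1}$; $\tilde U_{ef}=(2/d_{t(f)}-1)a$ if $f=e^{-1}$; and $\tilde U_{ef}=0$ otherwise. The identity is an identity of polynomials (rational functions) in the variable $u$. *)

theory Defs
  imports "HOL-Combinatorics.Permutations" Complex_Main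
begin

definition simple_graph :: "'a set \<Rightarrow> ('a \<Rightarrow> 'a \<Rightarrow> bool) \<Rightarrow> bool" where
  "simple_graph V E \<longleftrightarrow> finite V \<and> (\<forall>x y. E x y \<longrightarrow> x \<in> V \<and> y \<in> V)
     \<and> (\<forall>x y. E x y \<longrightarrow> E y x) \<and> (\<forall>x. \<not> E x x)"

definition graph_connected :: "'a set \<Rightarrow> ('a \<Rightarrow> 'a \<Rightarrow> bool) \<Rightarrow> bool" where
  "graph_connected V E \<longleftrightarrow> (\<forall>x\<in>V. \<forall>y\<in>V. E\<^sup>*\<^sup>* x y)"

definition edges :: "'a set \<Rightarrow> ('a \<Rightarrow> 'a \<Rightarrow> bool) \<Rightarrow> 'a set set" where
  "edges V E = {{x, y} | x y. x \<in> V \<and> y \<in> V \<and> E x y}"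

definition arcs :: "'a set \<Rightarrow> ('a \<Rightarrow> 'a \<Rightarrow> bool) \<Rightarrow> ('a \<times> 'a) set" where
  "arcs V E = {(x, y). x \<in> V \<and> y \<in> V \<and> E x y}"

definition deg :: "'a set \<Rightarrow> ('a \<Rightarrow> 'a \<Rightarrow> bool) \<Rightarrow> 'a \<Rightarrow> nat" where
  "deg V E v = card {w \<in> V. E v w}"

text \<open>Generalized Grover matrix; for an arc e = (o(e), t(e)), e^{-1} = prod.swap e.\<close>
definition grover :: "'a set \<Rightarrow> ('a \<Rightarrow> 'a \<Rightarrow> bool) \<Rightarrow> real \<Rightarrow> real
    \<Rightarrow> ('a \<times> 'a) \<Rightarrow> ('a \<times> 'a) \<Rightarrow> real" where
  "grover V E a b e f =
     (if snd f = fst e \<and> f \<noteq> prod.swap e then (2 / real (deg V E (snd f)) - 1) * a + b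
      else if f = prod.swap e then (2 / real (deg V E (snd f)) - 1) * a
      else 0)"

text \<open>Matrices indexed by a finite set I, as functions I \<Rightarrow> I \<Rightarrow> real.\<close>
definition det_on :: "'i set \<Rightarrow> ('i \<Rightarrow> 'i \<Rightarrow> real) \<Rightarrow> real" where
  "det_on I M = (\<Sum>p | p permutes I. of_int (sign p) * (\<Prod>i\<in>I. M i (p i)))"

definition idm :: "'i \<Rightarrow> 'i \<Rightarrow> real" where
  "idm i j = (if i = j then 1 else 0)"

definition matmul :: "'i set \<Rightarrow> ('i \<Rightarrow> 'i \<Rightarrow> real) \<Rightarrow> ('i \<Rightarrow> 'i \<Rightarrow> real) \<Rightarrow> 'i \<Rightarrow> 'i \<Rightarrow> real" where
  "matmul I A B i j = (\<Sum>k\<in>I. A i k * B k j)"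

definition degmat :: "'a set \<Rightarrow> ('a \<Rightarrow> 'a \<Rightarrow> bool) \<Rightarrow> 'a \<Rightarrow> 'a \<Rightarrow> real" where
  "degmat V E x y = (if x = y then real (deg V E x) else 0)"

definition Ad :: "'a set \<Rightarrow> ('a \<Rightarrow> 'a \<Rightarrow> bool) \<Rightarrow> real \<Rightarrow> real \<Rightarrow> 'a \<Rightarrow> 'a \<Rightarrow> real" where
  "Ad V E a b x y = (if E x y then (2 - real (deg V E x)) * a + b * real (deg V E x) else 0)"

end

theory Submission
  imports Defs "Jordan_Normal_Form.Determinant"
begin

definition mk :: "(nat \<Rightarrow> 'i) \<Rightarrow> (nat \<Rightarrow> 'j) \<Rightarrow> nat \<Rightarrow> nat \<Rightarrow> ('i \<Rightarrow> 'j \<Rightarrow> real) \<Rightarrow> real mat" where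
  "mk g h r c F = mat r c (\<lambda>(i,j). F (g i) (h j))"

lemma mk_carrier[simp]: "mk g h r c F \<in> carrier_mat r c"
  by (simp add: mk_def)

lemma mk_dims[simp]: "dim_row (mk g h r c F) = r" "dim_col (mk g h r c F) = c"
  by (simp_all add: mk_def)

lemma mk_index[simp]: "i < r \<Longrightarrow> j < c \<Longrightarrow> mk g h r c F $$ (i,j) = F (g i) (h j)"
  by (simp add: mk_def)

lemma mk_mult:
  assumes "bij_betw h {0..<b} J"
  shows "mk g h a b F * mk h l b c G = mk g l a c (\<lambda>x z. \<Sum>y\<in>J. F x y * G y z)"
proof (rule eq_matI)
  fix i j assume ij: "i < dim_row (mk g l a c (\<lambda>x z. \<Sum>y\<in>J. F x y * G y z))"
     "j < dim_col (mk g l a c (\<lambda>x z. \<Sum>y\<in>J. F x y * G y z))"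
  have "(mk g h a b F * mk h l b c G) $$ (i,j) = (\<Sum>t\<in>{0..<b}. F (g i) (h t) * G (h t) (l j))"
    using ij by (simp add: scalar_prod_def row_def col_def mk_def)
  also have "\<dots> = (\<Sum>y\<in>J. F (g i) y * G y (l j))"
    by (rule sum.reindex_bij_betw[OF assms])
  finally show "(mk g h a b F * mk h l b c G) $$ (i,j) = mk g l a c (\<lambda>x z. \<Sum>y\<in>J. F x y * G y z) $$ (i,j)"
    using ij by simp
qed auto

lemma mk_add: "mk g h r c F + mk g h r c G = mk g h r c (\<lambda>x y. F x y + G x y)"
  by (rule eq_matI) auto

lemma mk_minus: "mk g h r c F - mk g h r c G = mk g h r c (\<lambda>x y. F x y - G x y)"
  by (rule eq_matI) auto

lemma mk_smult: "s \<cdot>\<^sub>m mk g h r c F = mk g h r c (\<lambda>x y. s * F x y)"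
  by (rule eq_matI) auto

lemma mk_cong:
  assumes "\<And>i j. i < r \<Longrightarrow> j < c \<Longrightarrow> F (g i) (h j) = G (g i) (h j)"
  shows "mk g h r c F = mk g h r c G"
  by (rule eq_matI) (auto simp: assms)

lemma mk_cong_bij:
  assumes "bij_betw g {0..<r} I" "bij_betw h {0..<c} J" "\<And>x y. x \<in> I \<Longrightarrow> y \<in> J \<Longrightarrow> F x y = G x y"
  shows "mk g h r c F = mk g h r c G"
  by (rule mk_cong, rule assms(3)) (use assms(1,2) in \<open>auto simp: bij_betw_def\<close>)

lemma mk_one:
  assumes "inj_on g {0..<k}"
  shows "mk g g k k idm = 1\<^sub>m k"
  by (rule eq_matI) (use assms in \<open>auto simp: idm_def inj_on_def\<close>)

lemma mk_zero: "mk g h r c (\<lambda>_ _. 0) = 0\<^sub>m r c"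
  by (rule eq_matI) auto

lemma det_on_mk:
  assumes g: "bij_betw g {0..<k} I"
  shows "det_on I F = det (mk g g k k F)"
proof -
  let ?A = "{0..<k}"
  let ?mp = "map_permutation ?A g"
  let ?g' = "inv_into ?A g"
  have fin: "finite I" using g bij_betw_finite by blast
  have inj: "inj_on g ?A" using g by (auto simp: bij_betw_def)
  have g': "bij_betw ?g' I ?A" using g by (rule bij_betw_inv_into)
  have g'g: "\<And>x. x \<in> ?A \<Longrightarrow> ?g' (g x) = x" using inj by (simp add: inv_into_f_f)
  have gg': "\<And>x. x \<in> I \<Longrightarrow> g (?g' x) = x" using g by (simp add: bij_betw_inv_into_right)
  have bij: "bij_betw ?mp {p. p permutes ?A} {q. q permutes I}"
  proof (rule bij_betw_byWitness[where f' = "map_permutation I ?g'"])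
    show "\<forall>p\<in>{p. p permutes ?A}. map_permutation I ?g' (?mp p) = p"
      using map_permutation_compose_inv[OF g _ g'g] by auto
    show "\<forall>q\<in>{q. q permutes I}. ?mp (map_permutation I ?g' q) = q"
      using map_permutation_compose_inv[OF g' _ gg'] by auto
    show "?mp ` {p. p permutes ?A} \<subseteq> {q. q permutes I}"
      using map_permutation_permutes[OF g] by auto
    show "map_permutation I ?g' ` {q. q permutes I} \<subseteq> {p. p permutes ?A}"
      using map_permutation_permutes[OF g'] by auto
  qed
  have "det_on I F = (\<Sum>p | p permutes ?A. of_int (sign (?mp p)) * (\<Prod>x\<in>I. F x (?mp p x)))"
    unfolding det_on_def by (rule sum.reindex_bij_betw[OF bij, symmetric])
  also have "\<dots> = (\<Sum>p | p permutes ?A. of_int (sign p) * (\<Prod>i\<in>?A. F (g i) (g (p i))))"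
  proof (rule sum.cong[OF refl])
    fix p assume "p \<in> {p. p permutes ?A}"
    hence p: "p permutes ?A" by simp
    have "(\<Prod>x\<in>I. F x (?mp p x)) = (\<Prod>i\<in>?A. F (g i) (?mp p (g i)))"
      by (rule prod.reindex_bij_betw[OF g, symmetric])
    also have "\<dots> = (\<Prod>i\<in>?A. F (g i) (g (p i)))"
      by (rule prod.cong[OF refl]) (simp add: map_permutation_apply[OF inj])
    finally show "of_int (sign (?mp p)) * (\<Prod>x\<in>I. F x (?mp p x)) = of_int (sign p) * (\<Prod>i\<in>?A. F (g i) (g (p i)))"
      using sign_map_permutation[OF inj p] by simp
  qed
  also have "\<dots> = det (mk g g k k F)"
    by (subst det_def'[OF mk_carrier]) (intro sum.cong refl arg_cong2[where f="(*)"] prod.cong, auto simp: permutes_in_image[of _ ?A])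
  finally show ?thesis .
qed

lemma sg_facts:
  assumes "simple_graph V E"
  shows "finite V" "finite (arcs V E)" "\<And>e. e \<in> arcs V E \<Longrightarrow> prod.swap e \<in> arcs V E"
    "\<And>e. e \<in> arcs V E \<Longrightarrow> fst e \<noteq> snd e"
    "\<And>e. e \<in> arcs V E \<Longrightarrow> fst e \<in> V \<and> snd e \<in> V"
proof -
  show f: "finite V" using assms by (simp add: simple_graph_def)
  have "arcs V E \<subseteq> V \<times> V" by (auto simp: arcs_def)
  thus "finite (arcs V E)" using f finite_subset by blast
  show "\<And>e. e \<in> arcs V E \<Longrightarrow> prod.swap e \<in> arcs V E" using assms
    by (auto simp: arcs_def simple_graph_def)
  show "\<And>e. e \<in> arcs V E \<Longrightarrow> fst e \<noteq> snd e" using assms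
    by (auto simp: arcs_def simple_graph_def)
  show "\<And>e. e \<in> arcs V E \<Longrightarrow> fst e \<in> V \<and> snd e \<in> V"
    by (auto simp: arcs_def)
qed

lemma half_arcs:
  assumes sg: "simple_graph V E"
  shows "\<exists>H. H \<subseteq> arcs V E \<and> (\<forall>e\<in>arcs V E. (e \<in> H) \<noteq> (prod.swap e \<in> H))
           \<and> card H = card (edges V E)"
proof -
  let ?D = "arcs V E"
  note sf = sg_facts[OF sg]
  define rep where "rep p = (SOME q. q \<in> ?D \<and> {fst q, snd q} = {fst p, snd p})" for p :: "'a \<times> 'a"
  have rep: "rep e \<in> ?D \<and> {fst (rep e), snd (rep e)} = {fst e, snd e}" if "e \<in> ?D" for e
    unfolding rep_def by (rule someI[of _ e]) (use that in auto)
  have rep_eq: "rep p = rep q" if "{fst p, snd p} = {fst q, snd q}" for p q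
    unfolding rep_def by (simp only: that)
  have rep_sw: "rep (prod.swap e) = rep e" for e
    unfolding rep_def by (cases e) (simp add: insert_commute)
  have rep_cases: "rep e = e \<or> rep e = prod.swap e" if "e \<in> ?D" for e
    using rep[OF that] by (cases e; cases "rep e") (auto simp: doubleton_eq_iff)
  define H where "H = {e\<in>?D. rep e = e}"
  have 1: "H \<subseteq> ?D" by (auto simp: H_def)
  have 2: "(e \<in> H) \<noteq> (prod.swap e \<in> H)" if "e \<in> ?D" for e
  proof -
    have "e \<noteq> prod.swap e" using sf(4)[OF that] by (cases e) auto
    thus ?thesis using rep_cases[OF that] rep_sw[of e] sf(3)[OF that] that
      by (auto simp: H_def)
  qed
  have "bij_betw (\<lambda>e. {fst e, snd e}) H (edges V E)"
  proof (rule bij_betw_imageI)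
    show "inj_on (\<lambda>e. {fst e, snd e}) H"
    proof (rule inj_onI)
      fix x y assume xy: "x \<in> H" "y \<in> H" "{fst x, snd x} = {fst y, snd y}"
      have "rep x = rep y" by (rule rep_eq) (use xy(3) in simp)
      thus "x = y" using xy by (auto simp: H_def)
    qed
    show "(\<lambda>e. {fst e, snd e}) ` H = edges V E"
    proof
      show "(\<lambda>e. {fst e, snd e}) ` H \<subseteq> edges V E"
        by (auto simp: H_def edges_def arcs_def) blast
      show "edges V E \<subseteq> (\<lambda>e. {fst e, snd e}) ` H"
      proof
        fix s assume "s \<in> edges V E"
        then obtain x y where xy: "s = {x,y}" "(x,y) \<in> ?D" by (auto simp: edges_def arcs_def)
        from rep[OF xy(2)] have r: "rep (x,y) \<in> ?D" "{fst (rep (x,y)), snd (rep (x,y))} = {x,y}" by auto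
        have "rep (rep (x,y)) = rep (x,y)" by (rule rep_eq) (use r(2) in simp)
        hence rH: "rep (x,y) \<in> H" using r unfolding H_def by blast
        thus "s \<in> (\<lambda>e. {fst e, snd e}) ` H" using r(2) xy(1) rH by (intro image_eqI[where x="rep (x,y)"]) auto
      qed
    qed
  qed
  hence "card H = card (edges V E)" by (rule bij_betw_same_card)
  with 1 2 show ?thesis by blast
qed

locale halfarcs =
  fixes D :: "('a \<times> 'a) set" and H :: "('a \<times> 'a) set" and h :: "nat \<Rightarrow> 'a \<times> 'a" and m :: nat
  assumes HD: "H \<subseteq> D" and Hsw: "\<forall>e\<in>D. (e \<in> H) \<noteq> (prod.swap e \<in> H)"
    and Dsw: "\<forall>e\<in>D. prod.swap e \<in> D" and hbij: "bij_betw h {0..<m} H"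
begin

definition gD :: "nat \<Rightarrow> 'a \<times> 'a" where
  "gD i = (if i < m then h i else prod.swap (h (i - m)))"

lemma sub_lt[simp]: "\<not> i < m \<Longrightarrow> i < m + m \<Longrightarrow> i - m < (m::nat)" by arith

lemma h_in: "i < m \<Longrightarrow> h i \<in> H" using hbij by (auto simp: bij_betw_def)
lemma h_inj: "i < m \<Longrightarrow> j < m \<Longrightarrow> h i = h j \<longleftrightarrow> i = j"
  using hbij by (auto simp: bij_betw_def inj_on_def)
lemma sw_notin: "i < m \<Longrightarrow> prod.swap (h i) \<notin> H"
  using h_in HD Hsw by blast
lemma h_sw: "i < m \<Longrightarrow> j < m \<Longrightarrow> h i \<noteq> prod.swap (h j)"
  using h_in sw_notin by metis
lemma sw_sw: "i < m \<Longrightarrow> j < m \<Longrightarrow> prod.swap (h i) = prod.swap (h j) \<longleftrightarrow> i = j"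
  using h_inj by (metis swap_swap)

lemma gD_bij: "bij_betw gD {0..<m+m} D"
proof (rule bij_betw_imageI)
  show "inj_on gD {0..<m+m}"
  proof (rule inj_onI)
    fix i j assume ij: "i \<in> {0..<m+m}" "j \<in> {0..<m+m}" "gD i = gD j"
    show "i = j"
    proof (cases "i < m"; cases "j < m")
      assume "i < m" "j < m" thus ?thesis using ij h_inj by (simp add: gD_def)
    next
      assume "i < m" "\<not> j < m" thus ?thesis using ij h_sw[of i "j - m"] by (simp add: gD_def)
    next
      assume a: "\<not> i < m" "j < m"
      hence "prod.swap (h (i - m)) = h j" using ij by (simp add: gD_def)
      moreover have "i - m < m" using a ij by auto
      ultimately show ?thesis using h_sw[of j "i - m"] a by metis
    next
      assume "\<not> i < m" "\<not> j < m" thus ?thesis using ij sw_sw[of "i - m" "j - m"] by (simp add: gD_def)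
    qed
  qed
  show "gD ` {0..<m+m} = D"
  proof
    show "gD ` {0..<m+m} \<subseteq> D"
    proof
      fix e assume "e \<in> gD ` {0..<m+m}"
      then obtain i where i: "i < m + m" "e = gD i" by auto
      show "e \<in> D"
      proof (cases "i < m")
        case True thus ?thesis using i h_in HD by (auto simp: gD_def)
      next
        case False
        hence "h (i - m) \<in> D" using i h_in HD by auto
        thus ?thesis using i False Dsw by (auto simp: gD_def)
      qed
    qed
    show "D \<subseteq> gD ` {0..<m+m}"
    proof
      fix e assume e: "e \<in> D"
      show "e \<in> gD ` {0..<m+m}"
      proof (cases "e \<in> H")
        case True
        then obtain i where "i < m" "e = h i" using hbij by (auto simp: bij_betw_def)
        thus ?thesis by (intro image_eqI[of _ _ i]) (auto simp: gD_def)
      next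
        case False
        hence "prod.swap e \<in> H" using Hsw e by blast
        then obtain i where i: "i < m" "prod.swap e = h i" using hbij by (auto simp: bij_betw_def)
        hence "e = gD (i + m)" by (auto simp: gD_def) (metis swap_swap)
        thus ?thesis using i by auto
      qed
    qed
  qed
qed

lemma det_J: "det (mk gD gD (m+m) (m+m) (\<lambda>e f. idm e f + c * (if f = prod.swap e then 1 else 0)))
   = (1 - c^2)^m"
proof -
  have "mk gD gD (m+m) (m+m) (\<lambda>e f. idm e f + c * (if f = prod.swap e then 1 else 0))
     = four_block_mat (1\<^sub>m m) (c \<cdot>\<^sub>m 1\<^sub>m m) (c \<cdot>\<^sub>m 1\<^sub>m m) (1\<^sub>m m)"
  proof (rule eq_matI)
    fix i j assume ij: "i < dim_row (four_block_mat (1\<^sub>m m) (c \<cdot>\<^sub>m 1\<^sub>m m) (c \<cdot>\<^sub>m 1\<^sub>m m) (1\<^sub>m m))"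
      "j < dim_col (four_block_mat (1\<^sub>m m) (c \<cdot>\<^sub>m 1\<^sub>m m) (c \<cdot>\<^sub>m 1\<^sub>m m) (1\<^sub>m m))"
    hence ij': "i < m + m" "j < m + m" by auto
    show "mk gD gD (m+m) (m+m) (\<lambda>e f. idm e f + c * (if f = prod.swap e then 1 else 0)) $$ (i,j)
       = four_block_mat (1\<^sub>m m) (c \<cdot>\<^sub>m 1\<^sub>m m) (c \<cdot>\<^sub>m 1\<^sub>m m) (1\<^sub>m m) $$ (i,j)"
    proof (cases "i < m"; cases "j < m")
      assume "i < m" "j < m" thus ?thesis using ij' h_inj[of i j] h_sw[of j i]
        by (simp add: gD_def idm_def)
    next
      assume a: "i < m" "\<not> j < m" thus ?thesis using ij' sw_sw[of "j - m" i] h_sw[of i "j - m"]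
        by (auto simp: gD_def idm_def)
    next
      assume a: "\<not> i < m" "j < m"
      have "i - m < m" using a ij' by auto
      hence "prod.swap (h (i - m)) \<noteq> h j" using h_sw[of j "i - m"] a by metis
      thus ?thesis using a ij' h_inj[of j "i - m"]
        by (auto simp: gD_def idm_def)
    next
      assume "\<not> i < m" "\<not> j < m" thus ?thesis using ij' sw_sw[of "i - m" "j - m"] h_sw[of "i - m" "j - m"]
        by (auto simp: gD_def idm_def)
    qed
  qed auto
  also have "det \<dots> = det (1\<^sub>m m * 1\<^sub>m m - (c \<cdot>\<^sub>m 1\<^sub>m m) * (c \<cdot>\<^sub>m 1\<^sub>m m))"
    by (rule det_four_block_mat) auto
  also have "1\<^sub>m m * 1\<^sub>m m - (c \<cdot>\<^sub>m 1\<^sub>m m) * (c \<cdot>\<^sub>m 1\<^sub>m m) = (1 - c^2) \<cdot>\<^sub>m (1\<^sub>m m :: real mat)"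
    by (rule eq_matI) (auto simp: power2_eq_square)
  also have "det \<dots> = (1 - c^2)^m" by simp
  finally show ?thesis .
qed

end

lemma sum_idm_r: "finite D \<Longrightarrow> f \<in> D \<Longrightarrow> (\<Sum>y\<in>D. F y * idm y f) = (F f :: real)"
  by (subst sum.cong[OF refl, of _ _ "\<lambda>y. if y = f then F y else 0"]) (auto simp: idm_def)
lemma sum_idm_l: "finite D \<Longrightarrow> e \<in> D \<Longrightarrow> (\<Sum>y\<in>D. idm e y * F y) = (F e :: real)"
  by (subst sum.cong[OF refl, of _ _ "\<lambda>y. if y = e then F y else 0"]) (auto simp: idm_def)

lemma idm_simps: "x * idm a b = (if a = b then x else 0)" "idm a b * x = (if a = b then x else 0)"
  "x * (if P then y else 0) = (if P then x * y else (0::real))"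
  "(if P then y else 0) * x = (if P then y * x else (0::real))"
  by (auto simp: idm_def)

lemma mk_idm: "bij_betw g {0..<k} I \<Longrightarrow> mk g g k k idm = 1\<^sub>m k"
  by (rule mk_one) (simp add: bij_betw_def)

lemma det_mk_sidm: "bij_betw g {0..<k} I \<Longrightarrow> det (mk g g k k (\<lambda>x y. s * idm x y)) = s ^ k"
  by (simp add: mk_smult[symmetric] mk_idm)

lemma mult_fb_mk:
  assumes g1: "bij_betw g1 {0..<a} I" and g2: "bij_betw g2 {0..<b} J"
  shows "four_block_mat (mk g1 g1 a a A1) (mk g1 g2 a b B1) (mk g2 g1 b a C1) (mk g2 g2 b b D1) *
         four_block_mat (mk g1 g1 a a A2) (mk g1 g2 a b B2) (mk g2 g1 b a C2) (mk g2 g2 b b D2)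
   = four_block_mat
      (mk g1 g1 a a (\<lambda>x z. (\<Sum>y\<in>I. A1 x y * A2 y z) + (\<Sum>y\<in>J. B1 x y * C2 y z)))
      (mk g1 g2 a b (\<lambda>x z. (\<Sum>y\<in>I. A1 x y * B2 y z) + (\<Sum>y\<in>J. B1 x y * D2 y z)))
      (mk g2 g1 b a (\<lambda>x z. (\<Sum>y\<in>I. C1 x y * A2 y z) + (\<Sum>y\<in>J. D1 x y * C2 y z)))
      (mk g2 g2 b b (\<lambda>x z. (\<Sum>y\<in>I. C1 x y * B2 y z) + (\<Sum>y\<in>J. D1 x y * D2 y z)))"
  by (subst mult_four_block_mat[OF mk_carrier mk_carrier mk_carrier mk_carrier mk_carrier mk_carrier mk_carrier mk_carrier])
     (simp add: mk_mult[OF g1] mk_mult[OF g2] mk_add)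

lemma block_main:
  fixes gD :: "nat \<Rightarrow> 'd" and gV :: "nat \<Rightarrow> 'v"
  assumes gD: "bij_betw gD {0..<k} D" and gV: "bij_betw gV {0..<n} V"
    and RU: "\<And>e f. e \<in> D \<Longrightarrow> f \<in> D \<Longrightarrow> (\<Sum>l\<in>D. Rm e l * Ub l f) = s * idm e f"
  shows "det (mk gD gD k k Rm) * det (mk gD gD k k (\<lambda>e f. Ub e f - u * (\<Sum>v\<in>V. S e v * T v f))) * s ^ n
    = s ^ k * det (mk gV gV n n (\<lambda>v w. s * idm v w - u * (\<Sum>e\<in>D. T v e * (\<Sum>f\<in>D. Rm e f * S f w))))"
proof -
  have fD: "finite D" using gD bij_betw_finite by blast
  have fV: "finite V" using gV bij_betw_finite by blast
  note fb = mult_fb_mk[OF gD gV]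
  note cD = mk_cong_bij[OF gD gD] and cDV = mk_cong_bij[OF gD gV] and cVD = mk_cong_bij[OF gV gD]
    and cV = mk_cong_bij[OF gV gV]
  note simps = idm_simps sum.delta[OF fD] sum.delta'[OF fD] sum.delta[OF fV] sum.delta'[OF fV]
  let ?MD = "mk gD gD k k" and ?MV = "mk gV gV n n" and ?MDV = "mk gD gV k n" and ?MVD = "mk gV gD n k"
  let ?z = "\<lambda>_ _. 0::real"
  define RS where "RS = (\<lambda>e w. \<Sum>f\<in>D. Rm e f * S f w)"
  define N0 where "N0 = (\<lambda>v w. s * idm v w - u * (\<Sum>e\<in>D. T v e * RS e w))"
  define Lm where "Lm = (\<lambda>e f. Ub e f - u * (\<Sum>v\<in>V. S e v * T v f))"
  define M where "M = four_block_mat (?MD Ub) (?MDV (\<lambda>e v. u * S e v)) (?MVD T) (?MV idm)"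
  have Mc: "M \<in> carrier_mat (k+n) (k+n)" unfolding M_def by (rule four_block_carrier_mat) auto
  define NA where "NA = four_block_mat (?MD idm) (?MDV ?z) (?MVD (\<lambda>v f. - T v f)) (?MV idm)"
  have NAc: "NA \<in> carrier_mat (k+n) (k+n)" unfolding NA_def by (rule four_block_carrier_mat) auto
  have MNA: "M * NA = four_block_mat (?MD Lm) (?MDV (\<lambda>e v. u * S e v)) (?MVD ?z) (?MV idm)"
    unfolding M_def NA_def fb
    by (intro cong_four_block_mat cD cDV cVD cV) (simp_all add: simps Lm_def sum_negf sum_distrib_left mult.assoc)
  have dNA: "det NA = 1" unfolding NA_def
    by (subst det_four_block_mat_upper_right_zero[of _ k _ n]) (auto simp: mk_idm[OF gD] mk_idm[OF gV] mk_zero)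
  have dMNA: "det (M * NA) = det (?MD Lm)" unfolding MNA
    by (subst det_four_block_mat_lower_left_zero[of _ k _ n]) (auto simp: mk_idm[OF gV] mk_zero)
  have dM: "det M = det (?MD Lm)" using dMNA det_mult[OF Mc NAc] dNA by simp
  define NB where "NB = four_block_mat (?MD Rm) (?MDV ?z) (?MVD ?z) (?MV idm)"
  have NBc: "NB \<in> carrier_mat (k+n) (k+n)" unfolding NB_def by (rule four_block_carrier_mat) auto
  have NBM: "NB * M = four_block_mat (?MD (\<lambda>e f. s * idm e f)) (?MDV (\<lambda>e v. u * RS e v)) (?MVD T) (?MV idm)"
    unfolding M_def NB_def fb
    by (intro cong_four_block_mat cD cDV cVD cV) (simp_all add: simps RU RS_def sum_distrib_left ac_simps)
  have dNB: "det NB = det (?MD Rm)" unfolding NB_def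
    by (subst det_four_block_mat_upper_right_zero[of _ k _ n]) (auto simp: mk_idm[OF gV] mk_zero)
  define NC where "NC = four_block_mat (?MD idm) (?MDV (\<lambda>e v. - u * RS e v)) (?MVD ?z) (?MV (\<lambda>v w. s * idm v w))"
  have NCc: "NC \<in> carrier_mat (k+n) (k+n)" unfolding NC_def by (rule four_block_carrier_mat) auto
  have NBMNC: "(NB * M) * NC = four_block_mat (?MD (\<lambda>e f. s * idm e f)) (?MDV ?z) (?MVD T) (?MV N0)"
    unfolding NBM NC_def fb
    by (intro cong_four_block_mat cD cDV cVD cV) (simp_all add: simps N0_def sum_distrib_left sum_negf ac_simps)
  have dNC: "det NC = s ^ n" unfolding NC_def
    by (subst det_four_block_mat_lower_left_zero[of _ k _ n]) (auto simp: mk_idm[OF gD] mk_zero det_mk_sidm[OF gV])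
  have dF: "det ((NB * M) * NC) = s ^ k * det (?MV N0)" unfolding NBMNC
    by (subst det_four_block_mat_upper_right_zero[of _ k _ n]) (auto simp: mk_zero det_mk_sidm[OF gD])
  have "det ((NB * M) * NC) = det NB * det M * det NC"
    using det_mult[OF mult_carrier_mat[OF NBc Mc] NCc] det_mult[OF NBc Mc] by simp
  thus ?thesis using dF dNC dNB dM unfolding N0_def RS_def Lm_def by simp
qed

lemma deg_pos:
  assumes sg: "simple_graph V E" and con: "graph_connected V E" and c2: "card V \<ge> 2" and v: "v \<in> V"
  shows "deg V E v > 0"
proof -
  have fV: "finite V" using sg by (simp add: simple_graph_def)
  have "\<not> V \<subseteq> {v}" using card_mono[of "{v}" V] c2 by auto
  then obtain w where w: "w \<in> V" "w \<noteq> v" by auto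
  have "E\<^sup>*\<^sup>* v w" using con v w by (simp add: graph_connected_def)
  then obtain z where z: "E v z" using w(2) by (metis converse_rtranclpE)
  hence "z \<in> {x\<in>V. E v x}" using sg by (auto simp: simple_graph_def)
  moreover have "finite {x\<in>V. E v x}" using fV by simp
  ultimately show ?thesis unfolding deg_def by (metis card_gt_0_iff empty_iff)
qed

lemma deg_in:
  assumes sg: "simple_graph V E" and w: "w \<in> V"
  shows "card {e \<in> arcs V E. snd e = w} = deg V E w"
proof -
  have "{e \<in> arcs V E. snd e = w} = (\<lambda>x. (x, w)) ` {x\<in>V. E w x}"
    using sg w by (auto simp: arcs_def simple_graph_def image_iff)
  moreover have "inj_on (\<lambda>x. (x, w)) {x\<in>V. E w x}" by (auto simp: inj_on_def)
  ultimately show ?thesis by (simp add: card_image deg_def)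
qed

lemma transpose_mk: "transpose_mat (mk g h r c F) = mk h g c r (\<lambda>x y. F y x)"
  by (rule eq_matI) auto

lemma det_mk_diag:
  assumes g: "bij_betw g {0..<n} V"
  shows "det (mk g g n n (\<lambda>v w. d v * idm v w)) = (\<Prod>v\<in>V. d v)"
proof -
  have inj: "inj_on g {0..<n}" using g by (simp add: bij_betw_def)
  have "upper_triangular (mk g g n n (\<lambda>v w. d v * idm v w))"
    unfolding upper_triangular_def
  proof (intro allI impI)
    fix i j assume ij: "i < dim_row (mk g g n n (\<lambda>v w. d v * idm v w))" "j < i"
    hence "i < n" "j < n" "i \<noteq> j" by auto
    hence "g i \<noteq> g j" using inj by (metis atLeastLessThan_iff inj_on_eq_iff zero_le)
    thus "mk g g n n (\<lambda>v w. d v * idm v w) $$ (i, j) = 0" using ij by (simp add: idm_def)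
  qed
  hence "det (mk g g n n (\<lambda>v w. d v * idm v w)) = prod_list (diag_mat (mk g g n n (\<lambda>v w. d v * idm v w)))"
    by (rule det_upper_triangular[OF _ mk_carrier])
  also have "\<dots> = (\<Prod>i\<in>{0..<n}. d (g i))"
    by (simp add: prod_list_diag_prod idm_def)
  also have "\<dots> = (\<Prod>v\<in>V. d v)" by (rule prod.reindex_bij_betw[OF g])
  finally show ?thesis .
qed

theorem theorem5:
  fixes V :: "'a set" and E :: "'a \<Rightarrow> 'a \<Rightarrow> bool" and a b u :: real
  assumes "simple_graph V E" and "graph_connected V E" and "card V \<ge> 2"
    and "0 \<le> a" and "a \<le> 1"
    and "1 - b\<^sup>2 * u\<^sup>2 \<noteq> 0"
  shows "det_on (arcs V E) (\<lambda>e f. idm e f - u * grover V E a b e f)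
    = (1 - b\<^sup>2 * u\<^sup>2) powi (int (card (edges V E)) - int (card V))
        / (\<Prod>v\<in>V. real (deg V E v))
      * det_on V (\<lambda>x y. matmul V (degmat V E)
            (\<lambda>i j. (1 + b * (2 * a - b) * u\<^sup>2) * idm i j + b * (b - a) * u\<^sup>2 * degmat V E i j) x y
          - u * Ad V E a b x y)"
proof -
  note sg = assms(1)
  note sf = sg_facts[OF sg]
  define D where "D = arcs V E"
  define s where "s = 1 - b\<^sup>2 * u\<^sup>2"
  have s0: "s \<noteq> 0" using assms(6) by (simp add: s_def)
  define n where "n = card V"
  define d where "d v = real (deg V E v)" for v
  have dpos: "d v > 0" if "v \<in> V" for v using deg_pos[OF assms(1-3) that] by (simp add: d_def)
  have fD: "finite D" and fV: "finite V" using sf by (auto simp: D_def)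
  have swD: "prod.swap e \<in> D" if "e \<in> D" for e using sf that by (simp add: D_def)
  have inV: "fst e \<in> V" "snd e \<in> V" if "e \<in> D" for e using sf that by (auto simp: D_def)
  have neq: "fst e \<noteq> snd e" if "e \<in> D" for e using sf that by (auto simp: D_def)
  obtain H where H: "H \<subseteq> D" "\<forall>e\<in>D. (e \<in> H) \<noteq> (prod.swap e \<in> H)" "card H = card (edges V E)"
    using half_arcs[OF sg] unfolding D_def by blast
  define m where "m = card H"
  have fH: "finite H" using H(1) fD finite_subset by blast
  obtain h where h: "bij_betw h {0..<m} H" using ex_bij_betw_nat_finite[OF fH] unfolding m_def by blast
  interpret ha: halfarcs D H h m
    using H(1,2) swD h by unfold_locales blast+
  note gD = ha.gD_bij
  obtain gV where gV: "bij_betw gV {0..<n} V" using ex_bij_betw_nat_finite[OF fV] unfolding n_def by blast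
  define c where "c v = (2 / d v - 1) * a + b" for v
  define J where "J e f = (if f = prod.swap e then 1 else (0::real))" for e f :: "'a \<times> 'a"
  define Ub where "Ub e f = idm e f + (u * b) * J e f" for e f
  define Rm where "Rm e f = idm e f + (- (u * b)) * (if f = prod.swap e then 1 else 0)" for e f :: "'a \<times> 'a"
  define S where "S e v = (if v = fst e then c v else 0)" for e :: "'a \<times> 'a" and v
  define T where "T v f = (if snd f = v then 1 else (0::real))" for v and f :: "'a \<times> 'a"
  have RU: "(\<Sum>l\<in>D. Rm e l * Ub l f) = s * idm e f" if e: "e \<in> D" and f: "f \<in> D" for e f
  proof -
    have esw: "e \<noteq> prod.swap e" using neq[OF e] by (cases e) auto
    have "(\<Sum>l\<in>D. Rm e l * Ub l f) = (\<Sum>l\<in>D. (if l = e then Ub e f else 0) - u * b * (if l = prod.swap e then Ub (prod.swap e) f else 0))"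
      by (rule sum.cong[OF refl]) (use esw in \<open>auto simp: Rm_def idm_def\<close>)
    also have "\<dots> = Ub e f - u * b * Ub (prod.swap e) f"
      by (simp add: sum_subtractf sum_distrib_left[symmetric] fD e swD)
    also have "\<dots> = s * idm e f"
    proof -
      show ?thesis using esw by (cases "f = e"; cases "f = prod.swap e") (auto simp: Ub_def J_def idm_def s_def power2_eq_square algebra_simps)
    qed
    finally show ?thesis .
  qed
  have main: "det (mk ha.gD ha.gD (m+m) (m+m) Rm) * det (mk ha.gD ha.gD (m+m) (m+m) (\<lambda>e f. Ub e f - u * (\<Sum>v\<in>V. S e v * T v f))) * s ^ n
    = s ^ (m+m) * det (mk gV gV n n (\<lambda>v w. s * idm v w - u * (\<Sum>e\<in>D. T v e * (\<Sum>f\<in>D. Rm e f * S f w))))"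
    by (rule block_main[OF gD gV RU])
  have Rm_eq: "Rm = (\<lambda>e f. idm e f + (- (u * b)) * (if f = prod.swap e then 1 else 0))"
    by (simp add: Rm_def fun_eq_iff)
  have s_eq: "1 - (- (u * b))\<^sup>2 = s" by (simp add: s_def power2_eq_square algebra_simps)
  have dR: "det (mk ha.gD ha.gD (m+m) (m+m) Rm) = s ^ m"
    unfolding Rm_eq ha.det_J s_eq ..
  have cd: "c v * d v = (2 - d v) * a + b * d v" if "v \<in> V" for v
    using dpos[OF that] by (simp add: c_def field_simps)
  have ST: "(\<Sum>v\<in>V. S e v * T v f) = (if snd f = fst e then c (fst e) else 0)" if e: "e \<in> D" for e f
  proof -
    have "(\<Sum>v\<in>V. S e v * T v f) = (\<Sum>v\<in>V. if v = fst e then c v * T v f else 0)"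
      by (rule sum.cong[OF refl]) (simp add: S_def)
    also have "\<dots> = c (fst e) * T (fst e) f" using inV[OF e] fV by simp
    finally show ?thesis by (simp add: T_def)
  qed
  have gr: "idm e f - u * grover V E a b e f = Ub e f - u * (\<Sum>v\<in>V. S e v * T v f)"
    if e: "e \<in> D" and f: "f \<in> D" for e f
  proof (cases "f = prod.swap e")
    case True
    hence sf: "snd f = fst e" by (cases e) auto
    have esw: "e \<noteq> f" using neq[OF e] True by (cases e) auto
    have g: "grover V E a b e f = (2 / d (fst e) - 1) * a"
      unfolding grover_def using True sf by (simp add: d_def)
    have "Ub e f = u * b" using esw True by (simp add: Ub_def J_def idm_def)
    thus ?thesis unfolding g ST[OF e] using sf esw by (simp add: c_def idm_def algebra_simps)
  next
    case False
    have g: "grover V E a b e f = (if snd f = fst e then c (fst e) else 0)"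
      unfolding grover_def using False by (simp add: d_def c_def)
    have "Ub e f = idm e f" using False by (simp add: Ub_def J_def)
    thus ?thesis unfolding g ST[OF e] by simp
  qed
  have lhs: "det_on (arcs V E) (\<lambda>e f. idm e f - u * grover V E a b e f)
     = det (mk ha.gD ha.gD (m+m) (m+m) (\<lambda>e f. Ub e f - u * (\<Sum>v\<in>V. S e v * T v f)))"
    unfolding D_def[symmetric] det_on_mk[OF gD]
    by (rule arg_cong[where f=det], rule mk_cong_bij[OF gD gD], rule gr)
  define N0 where "N0 = (\<lambda>v w. s * idm v w - u * (\<Sum>e\<in>D. T v e * (\<Sum>f\<in>D. Rm e f * S f w)))"
  define Nf where "Nf = (\<lambda>x y. matmul V (degmat V E)
            (\<lambda>i j. (1 + b * (2 * a - b) * u\<^sup>2) * idm i j + b * (b - a) * u\<^sup>2 * degmat V E i j) x y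
          - u * Ad V E a b x y)"
  have RS: "(\<Sum>f\<in>D. Rm e f * S f v) = (if v = fst e then c v else 0) - u * b * (if v = snd e then c v else 0)"
    if e: "e \<in> D" for e v
  proof -
    have "(\<Sum>f\<in>D. Rm e f * S f v) = (\<Sum>f\<in>D. (if f = e then S e v else 0) - u * b * (if f = prod.swap e then S (prod.swap e) v else 0))"
    proof (rule sum.cong[OF refl])
      fix f
      have esw: "e \<noteq> prod.swap e" using neq[OF e] by (cases e) auto
      show "Rm e f * S f v = (if f = e then S e v else 0) - u * b * (if f = prod.swap e then S (prod.swap e) v else 0)"
        using esw by (cases "f = e"; cases "f = prod.swap e") (simp_all add: Rm_def idm_def)
    qed
    also have "\<dots> = S e v - u * b * S (prod.swap e) v"
      by (simp add: sum_subtractf sum_distrib_left[symmetric] fD e swD)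
    finally show ?thesis by (simp add: S_def)
  qed
  have TRS: "(\<Sum>e\<in>D. T w e * (\<Sum>f\<in>D. Rm e f * S f v))
     = c v * ((if E v w then 1 else 0) - u * b * (if v = w then d w else 0))" if v: "v \<in> V" and w: "w \<in> V" for v w
  proof -
    have "(\<Sum>e\<in>D. T w e * (\<Sum>f\<in>D. Rm e f * S f v))
       = (\<Sum>e\<in>D. (if snd e = w \<and> fst e = v then c v else 0)) - u * b * (\<Sum>e\<in>D. (if snd e = w \<and> v = w then c v else 0))"
      unfolding sum_distrib_left sum_subtractf[symmetric]
      by (rule sum.cong[OF refl]) (simp add: RS T_def)
    also have "(\<Sum>e\<in>D. (if snd e = w \<and> fst e = v then c v else 0)) = c v * card {e\<in>D. snd e = w \<and> fst e = v}"
      by (simp add: sum.inter_filter[OF fD, symmetric])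
    also have "{e\<in>D. snd e = w \<and> fst e = v} = (if E v w then {(v,w)} else {})"
      using v w by (auto simp: D_def arcs_def)
    also have "(\<Sum>e\<in>D. (if snd e = w \<and> v = w then c v else 0)) = (if v = w then c v * card {e\<in>D. snd e = w} else 0)"
      by (simp add: sum.inter_filter[OF fD, symmetric])
    also have "card {e\<in>D. snd e = w} = deg V E w" unfolding D_def by (rule deg_in[OF sg w])
    finally have X: "(\<Sum>e\<in>D. T w e * (\<Sum>f\<in>D. Rm e f * S f v)) = c v * real (card (if E v w then {(v, w)} else {})) -
       u * b * (if v = w then c v * real (deg V E w) else 0)" .
    show ?thesis unfolding X by (cases "E v w"; cases "v = w") (simp_all add: d_def algebra_simps)
  qed
  have Nf_eq: "Nf v w = d v * N0 w v" if v: "v \<in> V" and w: "w \<in> V" for v w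
  proof -
    have mm: "matmul V (degmat V E) X v y = d v * X v y" for X y
      unfolding matmul_def degmat_def using v fV by (simp add: d_def idm_simps)
    show ?thesis
    proof (cases "v = w")
      case True
      have nE: "\<not> E v v" using sg by (simp add: simple_graph_def)
      have N0v: "N0 v v = s + u * u * b * (c v * d v)"
        unfolding N0_def TRS[OF v v] using nE by (simp add: idm_def algebra_simps)
      have Nfv: "Nf v v = d v * ((1 + b * (2 * a - b) * u\<^sup>2) + b * (b - a) * u\<^sup>2 * d v)"
        unfolding Nf_def mm using nE by (simp add: idm_def degmat_def Ad_def d_def)
      show ?thesis unfolding True[symmetric] N0v Nfv cd[OF v] s_def
        by (simp add: power2_eq_square algebra_simps)
    next
      case False
      have N0v: "N0 w v = - u * (c v * (if E v w then 1 else 0))"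
        unfolding N0_def TRS[OF v w] using False by (simp add: idm_def)
      have Nfv: "Nf v w = - u * (if E v w then (2 - d v) * a + b * d v else 0)"
        unfolding Nf_def mm using False by (simp add: idm_def degmat_def Ad_def d_def)
      show ?thesis unfolding N0v Nfv using cd[OF v] by (simp add: algebra_simps)
    qed
  qed
  have "mk gV gV n n Nf = mk gV gV n n (\<lambda>v w. d v * idm v w) * transpose_mat (mk gV gV n n N0)"
    unfolding transpose_mk mk_mult[OF gV]
    by (rule mk_cong_bij[OF gV gV]) (simp add: Nf_eq idm_simps fV)
  hence rhs: "det_on V Nf = (\<Prod>v\<in>V. d v) * det (mk gV gV n n N0)"
    unfolding det_on_mk[OF gV]
    by (simp add: det_mult[OF mk_carrier transpose_carrier_mat[THEN iffD2, OF mk_carrier]] det_transpose[OF mk_carrier] det_mk_diag[OF gV])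
  have P0: "(\<Prod>v\<in>V. d v) \<noteq> 0" using dpos fV by (metis less_irrefl prod_zero_iff)
  have "det (mk ha.gD ha.gD (m+m) (m+m) (\<lambda>e f. Ub e f - u * (\<Sum>v\<in>V. S e v * T v f))) = s ^ m / s ^ n * det (mk gV gV n n N0)"
    using main unfolding dR N0_def using s0 by (simp add: field_simps power_add)
  moreover have "s powi (int (card (edges V E)) - int n) = s ^ m / s ^ n"
    using s0 H(3) by (simp add: power_int_diff m_def)
  ultimately show ?thesis unfolding lhs s_def[symmetric] n_def[symmetric] Nf_def[symmetric] rhs d_def[symmetric]
    using P0 by simp
qed

end
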